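(* Let $\langle\cdot\rangle$ be a probability measure on $\Omega$ that is stationary (the shifts $a\mapsto a(\cdot+z)$, $z\in\mathbb Z^d$, preserve $\langle\cdot\rangle$), and let $p>d+1$. Then for every stationary random field $u$ and every bond $b\in\mathbb B^d$, $$\big\langle|\nabla u(b)|^2\,\mathrm{dist}_a^{-p}(x_b,y_b)\big\rangle\le C(p,d)\sum_{i=1}^d\big\langle a(\{0,e_i\})\,|\nabla u(\{0,e_i\})|^2\big\rangle,$$ where $C(p,d):=\sum_{k=0}^\infty 2^{k(1-p)}|B_{2^{k+1}}(0)|<\infty$ (with the convention $1/\infty=0$).
   Context: $\mathbb B^d$ is the set of nearest-neighbour bonds $\{x,x+e_i\}$ of $\mathbb Z^d$; $x_b,y_b$ endpoints of $b$ with $y_b-x_b\in\{e_1,\dots,e_d\}$; $\nabla u(b)=u(y_b)-u(x_b)$. $\Omega=[0,1]^{\mathbb B^d}$; $a(\cdot+z)(b)=a(b+z)$ with $\{x,y\}+z=\{x+z,y+z\}$. Chemical distance $\mathrm{dist}_a(x,y)=\inf\{\sum_{b\in\pi}a(b)^{-1}:\pi$ a path from $x$ to $y\}$, $1/0=\infty$. $B_R(0)=([-R,R]\cap\mathbb Z)^d$, $|\cdot|$ cardinality. A random field $u:\Omega\times\mathbb Z^d\to\mathbb R$ is stationary if measurable and $u(a(\cdot+z),x)=u(a,x+z)$ for all $x,z$ and a.e. $a$. *)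

theory Defs
  imports "HOL-Probability.Probability"
begin

text \<open>Points of Z^d are int^'n with d = CARD('n). A bond {x, x+e_i} is encoded
  uniquely as the pair (x, i), so x_b = x and y_b = x + e_i.\<close>

type_synonym 'n bond = "(int^'n) \<times> 'n"

definition unitv :: "'n::finite \<Rightarrow> int^'n" where
  "unitv i = axis i 1"

definition xb :: "'n::finite bond \<Rightarrow> int^'n" where "xb b = fst b"
definition yb :: "'n::finite bond \<Rightarrow> int^'n" where "yb b = fst b + unitv (snd b)"

definition bshift :: "'n::finite bond \<Rightarrow> int^'n \<Rightarrow> 'n bond" where
  "bshift b z = (fst b + z, snd b)"

definition cshift :: "int^'n \<Rightarrow> ('n::finite bond \<Rightarrow> real) \<Rightarrow> ('n bond \<Rightarrow> real)" where
  "cshift z a = (\<lambda>b. a (bshift b z))"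

definition Omega_M :: "('n::finite bond \<Rightarrow> real) measure" where
  "Omega_M = PiM UNIV (\<lambda>_. restrict_space borel {0..1::real})"

definition grad :: "(int^'n \<Rightarrow> real) \<Rightarrow> 'n::finite bond \<Rightarrow> real" where
  "grad u b = u (yb b) - u (xb b)"

definition nn :: "int^'n \<Rightarrow> int^'n \<Rightarrow> bool" where
  "nn x y \<longleftrightarrow> (\<exists>i::'n::finite. y = x + unitv i \<or> x = y + unitv i)"

definition bond_of :: "int^'n \<Rightarrow> int^'n \<Rightarrow> 'n::finite bond" where
  "bond_of x y = (if \<exists>i. y = x + unitv i then (x, SOME i. y = x + unitv i)
                  else (y, SOME i. x = y + unitv i))"

definition is_path :: "(int^'n::finite) list \<Rightarrow> int^'n \<Rightarrow> int^'n \<Rightarrow> bool" where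
  "is_path ps x y \<longleftrightarrow> ps \<noteq> [] \<and> hd ps = x \<and> last ps = y \<and>
     (\<forall>k. Suc k < length ps \<longrightarrow> nn (ps ! k) (ps ! Suc k))"

definition bweight :: "('n::finite bond \<Rightarrow> real) \<Rightarrow> 'n bond \<Rightarrow> ennreal" where
  "bweight a b = (if a b = 0 then \<infinity> else ennreal (1 / a b))"

definition path_len :: "('n::finite bond \<Rightarrow> real) \<Rightarrow> (int^'n) list \<Rightarrow> ennreal" where
  "path_len a ps = sum_list (map (\<lambda>(x,y). bweight a (bond_of x y)) (zip ps (tl ps)))"

definition chem_dist :: "('n::finite bond \<Rightarrow> real) \<Rightarrow> int^'n \<Rightarrow> int^'n \<Rightarrow> ennreal" where
  "chem_dist a x y = (INF ps \<in> {ps. is_path ps x y}. path_len a ps)"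

definition chem_dist_pow :: "real \<Rightarrow> ('n::finite bond \<Rightarrow> real) \<Rightarrow> int^'n \<Rightarrow> int^'n \<Rightarrow> real" where
  "chem_dist_pow p a x y =
     (if chem_dist a x y = \<infinity> then 0 else enn2real (chem_dist a x y) powr (- p))"

definition box :: "int \<Rightarrow> (int^'n::finite) set" where
  "box R = {x. \<forall>i. \<bar>x $ i\<bar> \<le> R}"

definition Cpd :: "real \<Rightarrow> 'n::finite itself \<Rightarrow> nat \<Rightarrow> real" where
  "Cpd p _ k = 2 powr (real k * (1 - p)) * real (card (box (2 ^ (k+1)) :: (int^'n) set))"

definition stationary_measure :: "('n::finite bond \<Rightarrow> real) measure \<Rightarrow> bool" where
  "stationary_measure P \<longleftrightarrow> prob_space P \<and> sets P = sets Omega_M \<and>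
     (\<forall>z. distr P P (cshift z) = P)"

definition stationary_field ::
  "('n::finite bond \<Rightarrow> real) measure \<Rightarrow> (('n bond \<Rightarrow> real) \<Rightarrow> int^'n \<Rightarrow> real) \<Rightarrow> bool" where
  "stationary_field P u \<longleftrightarrow> (\<forall>x. (\<lambda>a. u a x) \<in> borel_measurable P) \<and>
     (\<forall>x z. AE a in P. u (cshift z a) x = u a (x + z))"

end

theory Submission
  imports Defs
begin


fun chn :: "(int^'n::finite) list \<Rightarrow> bool" where
  "chn [] = True" | "chn [x] = True" | "chn (x#y#r) = (nn x y \<and> chn (y#r))"

definition Eb :: "(int^'n::finite) list \<Rightarrow> 'n bond set" where
  "Eb ps = set (map (\<lambda>(x,y). bond_of x y) (zip ps (tl ps)))"

lemma Eb_simps[simp]: "Eb [] = {}" "Eb [x] = {}" "Eb (x#y#r) = insert (bond_of x y) (Eb (y#r))"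
  by (auto simp: Eb_def)

lemma finite_Eb[simp]: "finite (Eb ps)" by (simp add: Eb_def)

lemma path_len_simps[simp]: "path_len a [] = 0" "path_len a [x] = 0"
  "path_len a (x#y#r) = bweight a (bond_of x y) + path_len a (y#r)"
  by (auto simp: path_len_def)

lemma chn_iff: "chn ps \<longleftrightarrow> (\<forall>k. Suc k < length ps \<longrightarrow> nn (ps ! k) (ps ! Suc k))"
proof (induction ps rule: chn.induct)
  case (3 x y r)
  show ?case
  proof
    assume "chn (x#y#r)"
    then show "\<forall>k. Suc k < length (x#y#r) \<longrightarrow> nn ((x#y#r) ! k) ((x#y#r) ! Suc k)"
      using 3 by (auto simp: less_Suc_eq_0_disj)
  next
    assume H: "\<forall>k. Suc k < length (x#y#r) \<longrightarrow> nn ((x#y#r) ! k) ((x#y#r) ! Suc k)"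
    have "nn x y" using H[rule_format, of 0] by simp
    moreover have "\<forall>k. Suc k < length (y#r) \<longrightarrow> nn ((y#r) ! k) ((y#r) ! Suc k)"
    proof (intro allI impI)
      fix k assume "Suc k < length (y#r)"
      then show "nn ((y#r) ! k) ((y#r) ! Suc k)" using H[rule_format, of "Suc k"] by simp
    qed
    ultimately show "chn (x#y#r)" using 3 by simp
  qed
qed auto

lemma is_path_chn: "is_path ps x y \<Longrightarrow> chn ps"
  by (simp add: is_path_def chn_iff)

lemma unitv_inj: "unitv i = unitv j \<Longrightarrow> i = j"
  by (metis axis_eq_axis unitv_def zero_neq_one)

lemma nn_bond: assumes "nn x y"
  shows "(xb (bond_of x y) = x \<and> yb (bond_of x y) = y) \<or> (xb (bond_of x y) = y \<and> yb (bond_of x y) = x)"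
proof (cases "\<exists>i. y = x + unitv i")
  case True
  then have "y = x + unitv (SOME i. y = x + unitv i)" by (rule someI_ex)
  then show ?thesis using True by (simp add: bond_of_def xb_def yb_def)
next
  case False
  then have ex: "\<exists>i. x = y + unitv i" using assms by (auto simp: nn_def)
  then have "x = y + unitv (SOME i. x = y + unitv i)" by (rule someI_ex)
  then show ?thesis using False by (simp add: bond_of_def xb_def yb_def)
qed

lemma grad_bond: "nn x y \<Longrightarrow> \<bar>grad u (bond_of x y)\<bar> = \<bar>u y - u x\<bar>"
  using nn_bond[of x y] by (auto simp: grad_def)

lemma Eb_ends: "chn ps \<Longrightarrow> b \<in> Eb ps \<Longrightarrow> xb b \<in> set ps \<and> yb b \<in> set ps"
proof (induction ps rule: chn.induct)
  case (3 x y r)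
  then show ?case using nn_bond[of x y] by auto
qed auto

lemma fst_bond_of: "fst (bond_of x y) \<in> {x, y}"
  by (simp add: bond_of_def)

lemma Eb_fst: "b \<in> Eb ps \<Longrightarrow> fst b \<in> set ps"
proof (induction ps rule: chn.induct)
  case (3 x y r)
  then show ?case using fst_bond_of[of x y] by auto
qed auto

lemma telescope:
  assumes "chn ps" "v \<in> set ps" "w \<in> set ps"
  shows "\<bar>u v - u w\<bar> \<le> (\<Sum>b\<in>Eb ps. \<bar>grad u b\<bar>)"
  using assms
proof (induction ps arbitrary: v w rule: chn.induct)
  case (2 x) then show ?case by simp
next
  case (3 x y r)
  let ?E = "Eb (y#r)"
  have ch: "chn (y#r)" and nxy: "nn x y" using "3.prems"(1) by simp_all
  have IH: "\<bar>u v' - u w'\<bar> \<le> (\<Sum>b\<in>?E. \<bar>grad u b\<bar>)" if "v' \<in> set (y#r)" "w' \<in> set (y#r)" for v' w'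
    using "3.IH"[OF ch that] .
  have mono: "(\<Sum>b\<in>?E. \<bar>grad u b\<bar>) \<le> (\<Sum>b\<in>Eb (x#y#r). \<bar>grad u b\<bar>)"
    by (rule sum_mono2) auto
  have key: "\<bar>u w' - u x\<bar> \<le> (\<Sum>b\<in>Eb (x#y#r). \<bar>grad u b\<bar>)" if w: "w' \<in> set (y#r)" for w'
  proof (cases "x \<in> set (y#r)")
    case True
    show ?thesis using IH[OF w True] mono by linarith
  next
    case False
    have notin: "bond_of x y \<notin> ?E"
    proof
      assume "bond_of x y \<in> ?E"
      then have "xb (bond_of x y) \<in> set (y#r)" "yb (bond_of x y) \<in> set (y#r)"
        using Eb_ends[OF ch] by auto
      then show False using nn_bond[OF nxy] False by auto
    qed
    have "\<bar>u w' - u x\<bar> \<le> \<bar>u w' - u y\<bar> + \<bar>u y - u x\<bar>" by simp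
    also have "\<bar>u w' - u y\<bar> \<le> (\<Sum>b\<in>?E. \<bar>grad u b\<bar>)" using IH[OF w] by simp
    also have "\<bar>u y - u x\<bar> = \<bar>grad u (bond_of x y)\<bar>" using grad_bond[OF nxy] by simp
    finally show ?thesis using notin by (simp add: add.commute)
  qed
  have vv: "v = x \<or> v \<in> set (y#r)" and ww: "w = x \<or> w \<in> set (y#r)" using "3.prems" by auto
  have nonneg: "0 \<le> (\<Sum>b\<in>Eb (x#y#r). \<bar>grad u b\<bar>)" by (rule sum_nonneg) simp
  show ?case
  proof (cases "v = x")
    case True
    show ?thesis
    proof (cases "w = x")
      case True then show ?thesis using \<open>v = x\<close> nonneg by simp
    next
      case False then have "w \<in> set (y#r)" using ww by simp
      then show ?thesis using key[of w] True by (simp add: abs_minus_commute)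
    qed
  next
    case False
    then have v: "v \<in> set (y#r)" using vv by simp
    show ?thesis
    proof (cases "w = x")
      case True then show ?thesis using key[OF v] by simp
    next
      case False then have w: "w \<in> set (y#r)" using ww by simp
      show ?thesis using IH[OF v w] mono by linarith
    qed
  qed
qed simp


lemma bweight_ge1: "0 \<le> a b \<Longrightarrow> a b \<le> 1 \<Longrightarrow> 1 \<le> bweight a b"
proof (cases "a b = 0")
  case False
  assume "0 \<le> a b" "a b \<le> 1"
  then have "1 \<le> 1 / a b" using False by (simp add: field_simps)
  then have "ennreal 1 \<le> ennreal (1 / a b)" by (rule ennreal_leI)
  then show ?thesis using False by (simp add: bweight_def)
qed (simp add: bweight_def)

lemma path_len_ge: assumes "\<forall>b. 0 \<le> a b \<and> a b \<le> 1"
  shows "of_nat (length ps - 1) \<le> path_len a ps"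
proof (induction ps rule: chn.induct)
  case (3 x y r)
  have "1 \<le> bweight a (bond_of x y)" using assms bweight_ge1 by blast
  then have "1 + of_nat (length (y#r) - 1) \<le> bweight a (bond_of x y) + path_len a (y#r)"
    using 3 by (intro add_mono) auto
  then show ?case by simp
qed auto

lemma unitv_comp: "\<bar>unitv j $ i\<bar> \<le> (1::int)"
  by (simp add: unitv_def axis_def)

lemma nn_comp: "nn x y \<Longrightarrow> \<bar>(y - x) $ i\<bar> \<le> 1"
  using unitv_comp[of _ i] by (auto simp: nn_def)

lemma vert_box: "chn ps \<Longrightarrow> v \<in> set ps \<Longrightarrow> \<bar>(v - hd ps) $ i\<bar> \<le> int (length ps - 1)"
proof (induction ps arbitrary: v rule: chn.induct)
  case (3 x y r)
  show ?case
  proof (cases "v = x")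
    case False
    then have v: "v \<in> set (y#r)" using 3 by simp
    have "\<bar>(v - y) $ i\<bar> \<le> int (length (y#r) - 1)" using 3 v by simp
    moreover have "\<bar>(y - x) $ i\<bar> \<le> 1" using nn_comp[of x y i] "3.prems" by simp
    moreover have "(v - x) $ i = (v - y) $ i + (y - x) $ i" by simp
    ultimately show ?thesis by simp
  qed simp
qed auto

lemma sum_insert_le: "finite A \<Longrightarrow> sum f (insert x A) \<le> (f x :: ennreal) + sum f A"
  by (cases "x \<in> A") (auto simp: insert_absorb)

lemma sum_Eb_le: "(\<Sum>b\<in>Eb ps. bweight a b) \<le> path_len a ps"
proof (induction ps rule: chn.induct)
  case (3 x y r)
  have "(\<Sum>b\<in>Eb (x#y#r). bweight a b) \<le> bweight a (bond_of x y) + (\<Sum>b\<in>Eb (y#r). bweight a b)"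
    by (simp add: sum_insert_le)
  also have "\<dots> \<le> bweight a (bond_of x y) + path_len a (y#r)" using 3 by (intro add_left_mono) 
  finally show ?case by simp
qed auto



lemma box_eq: "box R = (\<lambda>f. vec_lambda f) ` (PiE UNIV (\<lambda>_. {-R..R}))"
proof
  show "box R \<subseteq> (\<lambda>f. vec_lambda f) ` (PiE UNIV (\<lambda>_. {-R..R}))"
  proof
    fix v assume "v \<in> box R"
    then have "(\<lambda>i. v $ i) \<in> PiE UNIV (\<lambda>_. {-R..R})" by (auto simp: box_def abs_le_iff minus_le_iff)
    moreover have "v = vec_lambda (\<lambda>i. v $ i)" by simp
    ultimately show "v \<in> (\<lambda>f. vec_lambda f) ` (PiE UNIV (\<lambda>_. {-R..R}))" by blast
  qed
next
  show "(\<lambda>f. vec_lambda f) ` (PiE UNIV (\<lambda>_. {-R..R})) \<subseteq> box R"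
  proof
    fix v assume "v \<in> (\<lambda>f. vec_lambda f) ` (PiE UNIV (\<lambda>_. {-R..R}))"
    then obtain f where f: "f \<in> PiE UNIV (\<lambda>_. {-R..R})" and v: "v = vec_lambda f" by blast
    have "\<bar>f i\<bar> \<le> R" for i using f[unfolded PiE_iff] by (simp add: abs_le_iff) (metis minus_le_iff)
    then show "v \<in> box R" by (simp add: box_def v)
  qed
qed

lemma finite_box[simp]: "finite (box R :: (int^'n::finite) set)"
  unfolding box_eq by (intro finite_imageI finite_PiE) auto

lemma card_box: "card (box R :: (int^'n::finite) set) \<le> nat (2*R+1) ^ CARD('n)"
proof -
  have "card (box R :: (int^'n) set) \<le> card (PiE (UNIV::'n set) (\<lambda>_. {-R..R}))"
    unfolding box_eq by (rule card_image_le) (intro finite_PiE, auto)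
  also have "\<dots> = nat (2*R+1) ^ CARD('n)" by (simp add: card_PiE)
  finally show ?thesis .
qed

lemma core:
  fixes u :: "int^'n::finite \<Rightarrow> real"
  assumes a01: "\<forall>b. 0 \<le> a b \<and> a b \<le> 1"
    and path: "is_path ps x y"
    and PL: "path_len a ps = ennreal L" and L0: "0 \<le> L" and LR: "L \<le> real_of_int R"
  shows "(u y - u x)\<^sup>2 \<le> L * (\<Sum>x'\<in>box R. \<Sum>i\<in>UNIV. a (x+x', i) * (grad u (x+x', i))\<^sup>2)"
proof -
  have ch: "chn ps" using path by (rule is_path_chn)
  define E where "E = Eb ps"
  have finE: "finite E" by (simp add: E_def)
  have sumle: "(\<Sum>b\<in>E. bweight a b) \<le> ennreal L" using sum_Eb_le[where ps=ps and a=a] PL by (simp add: E_def)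
  have pos: "0 < a b" if b: "b \<in> E" for b
  proof -
    have "bweight a b \<le> (\<Sum>b\<in>E. bweight a b)" by (rule member_le_sum[OF b]) (auto simp: finE)
    then have "bweight a b \<le> ennreal L" using sumle by order
    then have "bweight a b < top" by (rule le_less_trans[OF _ ennreal_less_top])
    then have "bweight a b \<noteq> \<infinity>" by simp
    then have "a b \<noteq> 0" by (auto simp: bweight_def)
    then show ?thesis using a01 by (metis order_le_less)
  qed
  have bw: "bweight a b = ennreal (1 / a b)" if "b \<in> E" for b
    using pos[OF that] by (simp add: bweight_def)
  have "ennreal (\<Sum>b\<in>E. 1 / a b) = (\<Sum>b\<in>E. ennreal (1 / a b))"
    using pos by (subst sum_ennreal) (auto intro: less_imp_le)
  also have "\<dots> = (\<Sum>b\<in>E. bweight a b)" using bw by (intro sum.cong) auto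
  finally have "ennreal (\<Sum>b\<in>E. 1 / a b) \<le> ennreal L" using sumle by simp
  then have sumw: "(\<Sum>b\<in>E. 1 / a b) \<le> L" using L0 by simp
  have CS: "(\<Sum>b\<in>E. \<bar>grad u b\<bar>)\<^sup>2 \<le> (\<Sum>b\<in>E. 1 / a b) * (\<Sum>b\<in>E. a b * (grad u b)\<^sup>2)"
  proof -
    have eq: "\<bar>grad u b\<bar> = sqrt (1 / a b) * (sqrt (a b) * \<bar>grad u b\<bar>)" if "b \<in> E" for b
    proof -
      have "sqrt (1 / a b) * sqrt (a b) = 1" using pos[OF that]
        by (simp add: real_sqrt_divide field_simps)
      then show ?thesis by (metis mult.assoc mult_1)
    qed
    have "(\<Sum>b\<in>E. \<bar>grad u b\<bar>) = (\<Sum>b\<in>E. sqrt (1 / a b) * (sqrt (a b) * \<bar>grad u b\<bar>))"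
      using eq by (rule sum.cong[OF refl])
    then have "(\<Sum>b\<in>E. \<bar>grad u b\<bar>)\<^sup>2 \<le> (\<Sum>b\<in>E. (sqrt (1 / a b))\<^sup>2) * (\<Sum>b\<in>E. (sqrt (a b) * \<bar>grad u b\<bar>)\<^sup>2)"
      using Cauchy_Schwarz_ineq_sum by metis
    also have "\<dots> = (\<Sum>b\<in>E. 1 / a b) * (\<Sum>b\<in>E. a b * (grad u b)\<^sup>2)"
      using pos by (intro arg_cong2[where f="(*)"] sum.cong) (auto simp: power_mult_distrib less_imp_le)
    finally show ?thesis .
  qed
  have tel: "\<bar>u y - u x\<bar> \<le> (\<Sum>b\<in>E. \<bar>grad u b\<bar>)"
  proof -
    have "y \<in> set ps" "x \<in> set ps" using path by (auto simp: is_path_def)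
    then show ?thesis unfolding E_def by (rule telescope[OF ch])
  qed
  have sq: "(u y - u x)\<^sup>2 \<le> (\<Sum>b\<in>E. \<bar>grad u b\<bar>)\<^sup>2"
    using power_mono[OF tel, of 2] by simp
  have lenL: "real (length ps - 1) \<le> L"
  proof -
    have "ennreal (real (length ps - 1)) \<le> ennreal L"
      using path_len_ge[OF a01, of ps] PL by (simp add: ennreal_of_nat_eq_real_of_nat)
    then show ?thesis using L0 by simp
  qed
  define F where "F = (\<lambda>(x', i). (x + x', i)) ` (box R \<times> (UNIV :: 'n set))"
  have EF: "E \<subseteq> F"
  proof
    fix b assume b: "b \<in> E"
    have "fst b \<in> set ps" using Eb_fst b by (simp add: E_def)
    then have "\<bar>(fst b - x) $ i\<bar> \<le> int (length ps - 1)" for i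
      using vert_box[OF ch] path by (auto simp: is_path_def)
    moreover have "int (length ps - 1) \<le> R" using lenL LR by linarith
    ultimately have "\<forall>i. \<bar>(fst b - x) $ i\<bar> \<le> R" using order_trans by blast
    then have "fst b - x \<in> box R" by (simp add: box_def)
    moreover have "b = (x + (fst b - x), snd b)" by simp
    ultimately show "b \<in> F" unfolding F_def
      by (intro image_eqI[where x="(fst b - x, snd b)"]) auto
  qed
  have inj: "inj_on (\<lambda>(x', i). (x + x', i)) (box R \<times> (UNIV :: 'n set))"
    by (auto simp: inj_on_def)
  have "(\<Sum>b\<in>E. a b * (grad u b)\<^sup>2) \<le> (\<Sum>b\<in>F. a b * (grad u b)\<^sup>2)"
    by (rule sum_mono2) (use EF a01 in \<open>auto simp: F_def\<close>)
  also have "\<dots> = (\<Sum>(x', i)\<in>box R \<times> UNIV. a (x+x', i) * (grad u (x+x', i))\<^sup>2)"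
    unfolding F_def by (subst sum.reindex[OF inj]) (simp add: case_prod_beta comp_def)
  also have "\<dots> = (\<Sum>x'\<in>box R. \<Sum>i\<in>UNIV. a (x+x', i) * (grad u (x+x', i))\<^sup>2)"
    by (subst sum.cartesian_product) simp
  finally have S: "(\<Sum>b\<in>E. a b * (grad u b)\<^sup>2) \<le> (\<Sum>x'\<in>box R. \<Sum>i\<in>UNIV. a (x+x', i) * (grad u (x+x', i))\<^sup>2)" .
  have "(\<Sum>b\<in>E. 1 / a b) * (\<Sum>b\<in>E. a b * (grad u b)\<^sup>2) \<le> L * (\<Sum>x'\<in>box R. \<Sum>i\<in>UNIV. a (x+x', i) * (grad u (x+x', i))\<^sup>2)"
    by (rule mult_mono[OF sumw S L0]) (use a01 in \<open>auto intro!: sum_nonneg\<close>)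
  then show ?thesis using sq CS by linarith
qed



definition Sk :: "('n::finite bond \<Rightarrow> real) \<Rightarrow> (int^'n \<Rightarrow> real) \<Rightarrow> int^'n \<Rightarrow> int \<Rightarrow> real" where
  "Sk a u x R = (\<Sum>x'\<in>box R. \<Sum>i\<in>UNIV. a (x+x', i) * (grad u (x+x', i))\<^sup>2)"

lemma ennreal_le_suminf: "(f k :: ennreal) \<le> suminf f"
  using sum_le_suminf[of f "{k}"] by simp

lemma chem_dist_ge1:
  assumes a01: "\<forall>b. 0 \<le> a b \<and> a b \<le> 1" and xy: "x \<noteq> y"
  shows "1 \<le> chem_dist a x y"
  unfolding chem_dist_def
proof (rule INF_greatest)
  fix ps assume "ps \<in> {ps. is_path ps x y}"
  then have p: "is_path ps x y" by simp
  have "2 \<le> length ps"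
  proof (rule ccontr)
    assume "\<not> 2 \<le> length ps"
    moreover have "ps \<noteq> []" using p by (simp add: is_path_def)
    moreover have "length ps \<noteq> 0" using \<open>ps \<noteq> []\<close> by simp
    ultimately have "length ps = 1" by linarith
    then have "ps = [hd ps]" by (cases ps) auto
    then show False using p xy unfolding is_path_def by (metis last.simps list.sel(1))
  qed
  then have "(1::ennreal) \<le> of_nat (length ps - 1)" by simp
  also have "\<dots> \<le> path_len a ps" by (rule path_len_ge[OF a01])
  finally show "1 \<le> path_len a ps" .
qed

lemma pointwise:
  fixes u :: "int^'n::finite \<Rightarrow> real" and p :: real
  assumes a01: "\<forall>b. 0 \<le> a b \<and> a b \<le> 1" and p1: "1 < p" and xy: "x \<noteq> y"
  shows "ennreal ((u y - u x)\<^sup>2 * chem_dist_pow p a x y)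
    \<le> (\<Sum>k. ennreal (2 powr (real k * (1 - p))) * ennreal (Sk a u x (2^(k+1))))"
proof (cases "chem_dist a x y = \<infinity>")
  case True
  then show ?thesis by (simp add: chem_dist_pow_def)
next
  case False
  define D where "D = enn2real (chem_dist a x y)"
  have CD: "chem_dist a x y = ennreal D" using False by (simp add: D_def ennreal_enn2real_if)
  have D0: "0 \<le> D" by (simp add: D_def)
  have "ennreal 1 \<le> ennreal D" using chem_dist_ge1[OF a01 xy] CD by simp
  then have D1: "1 \<le> D" using D0 by simp
  have cdp: "chem_dist_pow p a x y = D powr (- p)" using False by (simp add: chem_dist_pow_def D_def)
  define k where "k = nat \<lfloor>log 2 D\<rfloor>"
  have lg0: "0 \<le> log 2 D" using D1 by simp
  have kk: "real k = of_int \<lfloor>log 2 D\<rfloor>" using lg0 by (simp add: k_def)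
  have "2 powr real k \<le> 2 powr (log 2 D)" using kk by (simp add: of_int_floor_le)
  then have lowD: "2 powr real k \<le> D" using D1 by simp
  have "log 2 D < real k + 1" using kk by linarith
  then have "2 powr (log 2 D) < 2 powr (real k + 1)" by (rule powr_less_mono) simp
  moreover have "2 powr (log 2 D) = D" using D1 by (intro powr_log_cancel) auto
  ultimately have "D < 2 powr (real k + 1)" by simp
  moreover have "2 powr (real k + 1) = (2::real) ^ (k+1)" using powr_realpow[of 2 "k+1"] by (simp add: add.commute)
  ultimately have upD: "D < 2 ^ (k+1)" by simp
  define R :: int where "R = 2^(k+1)"
  have Rr: "real_of_int R = 2 ^ (k+1)" by (simp add: R_def)
  define S where "S = Sk a u x R"
  have S0: "0 \<le> S" using a01 by (auto simp: S_def Sk_def intro!: sum_nonneg)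
  have main: "(u y - u x)\<^sup>2 \<le> D * S"
  proof (rule field_le_epsilon)
    fix e :: real assume e: "0 < e"
    define d where "d = min (e / (S + 1)) (2^(k+1) - D)"
    have d0: "0 < d" using e S0 upD by (simp add: d_def)
    have "chem_dist a x y < ennreal (D + d)" using CD d0 D0 by (simp add: ennreal_less_iff)
    then obtain ps where ps: "is_path ps x y" and pl: "path_len a ps < ennreal (D + d)"
      unfolding chem_dist_def by (auto simp: INF_less_iff)
    define L where "L = enn2real (path_len a ps)"
    have "path_len a ps < top" using pl ennreal_less_top by (rule less_trans)
    then have PL: "path_len a ps = ennreal L" by (simp add: L_def ennreal_enn2real_if)
    have L0: "0 \<le> L" by (simp add: L_def)
    have LD: "L < D + d" using pl PL L0 by (simp add: ennreal_less_iff)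
    have LR: "L \<le> real_of_int R" using LD Rr by (simp add: d_def)
    have "(u y - u x)\<^sup>2 \<le> L * S" unfolding S_def Sk_def by (rule core[OF a01 ps PL L0 LR])
    also have "\<dots> \<le> (D + d) * S" using LD S0 by (intro mult_right_mono) auto
    also have "\<dots> = D * S + d * S" by (simp add: algebra_simps)
    also have "d * S \<le> e / (S + 1) * S" using S0 by (intro mult_right_mono) (auto simp: d_def)
    also have "e / (S + 1) * S \<le> e" using S0 e by (simp add: field_simps)
    finally show "(u y - u x)\<^sup>2 \<le> D * S + e" by simp
  qed
  have "(u y - u x)\<^sup>2 * D powr (- p) \<le> D * S * D powr (- p)"
    using main by (intro mult_right_mono) auto
  also have "\<dots> = D powr (1 - p) * S" 
  proof -
    have "D powr (1 - p) = D powr (1 + (- p))" by simp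
    also have "\<dots> = D powr 1 * D powr (- p)" by (rule powr_add)
    also have "\<dots> = D * D powr (- p)" using D0 by (simp add: powr_one)
    finally show ?thesis by simp
  qed
  also have "\<dots> \<le> 2 powr (real k * (1 - p)) * S"
  proof (intro mult_right_mono S0)
    have "D powr (1 - p) \<le> (2 powr real k) powr (1 - p)"
      by (rule powr_mono2') (use p1 lowD in auto)
    also have "\<dots> = 2 powr (real k * (1 - p))" by (simp add: powr_powr)
    finally show "D powr (1 - p) \<le> 2 powr (real k * (1 - p))" .
  qed
  finally have "ennreal ((u y - u x)\<^sup>2 * chem_dist_pow p a x y) \<le> ennreal (2 powr (real k * (1 - p)) * S)"
    using cdp by (intro ennreal_leI) simp
  also have "\<dots> = ennreal (2 powr (real k * (1 - p))) * ennreal (Sk a u x (2^(k+1)))"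
    unfolding S_def R_def by (rule ennreal_mult) (use S0[unfolded S_def R_def] in auto)
  also have "\<dots> \<le> (\<Sum>k. ennreal (2 powr (real k * (1 - p))) * ennreal (Sk a u x (2^(k+1))))"
    by (rule ennreal_le_suminf)
  finally show ?thesis .
qed



lemma space_Omega: "space Omega_M = {a. \<forall>b. 0 \<le> a b \<and> a b \<le> 1}"
  by (auto simp: Omega_M_def space_PiM PiE_iff)

lemma comp_meas_R: "(\<lambda>a. a b) \<in> measurable Omega_M (restrict_space borel {0..1::real})"
  unfolding Omega_M_def by (rule measurable_component_singleton) simp

lemma comp_meas: "(\<lambda>a. a b) \<in> borel_measurable Omega_M"
  using comp_meas_R measurable_restrict_space2_iff by blast

lemma cshift_meas:
  fixes z :: "int^'n::finite"
  shows "cshift z \<in> measurable (Omega_M :: ('n bond \<Rightarrow> real) measure) Omega_M"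
proof -
  have "(\<lambda>(a::'n bond \<Rightarrow> real) b. a (bshift b z)) \<in> measurable Omega_M (PiM UNIV (\<lambda>_. restrict_space borel {0..1::real}))"
  proof (rule measurable_PiM_single')
    fix b :: "'n bond"
    show "(\<lambda>a. a (bshift b z)) \<in> measurable Omega_M (restrict_space borel {0..1::real})"
      by (rule comp_meas_R)
  next
    show "(\<lambda>(a::'n bond \<Rightarrow> real) b. a (bshift b z)) \<in> space Omega_M \<rightarrow> (\<Pi>\<^sub>E b\<in>UNIV. space (restrict_space borel {0..1::real}))"
    proof
      fix a :: "'n bond \<Rightarrow> real" assume "a \<in> space Omega_M"
      then have h: "\<forall>b. 0 \<le> a b \<and> a b \<le> 1" by (simp add: space_Omega)
      show "(\<lambda>b. a (bshift b z)) \<in> (\<Pi>\<^sub>E b\<in>UNIV. space (restrict_space borel {0..1::real}))"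
      proof -
        have "\<forall>b. 0 \<le> a (bshift b z) \<and> a (bshift b z) \<le> 1" using h by blast
        then show ?thesis by (simp add: PiE_iff del: split_paired_All)
      qed
    qed
  qed
  then show ?thesis by (simp add: cshift_def[abs_def] Omega_M_def[symmetric])
qed

lemma summable_Cpd:
  assumes p: "p > real CARD('n::finite) + 1"
  shows "summable (Cpd p TYPE('n))"
proof -
  define d where "d = CARD('n)"
  define q where "q = 2 powr (1 - p) * 2 ^ d"
  have q_eq: "q = 2 powr (1 - p + real d)"
    by (simp add: q_def powr_add powr_realpow)
  have q1: "q < 1" unfolding q_eq by (rule powr_less_one) (use p d_def in auto)
  have q0: "0 \<le> q" by (simp add: q_def)
  have bound: "norm (Cpd p TYPE('n) k) \<le> 8 ^ d * q ^ k" for k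
  proof -
    have "real (card (box (2^(k+1)) :: (int^'n) set)) \<le> real (nat (2*2^(k+1)+1) ^ d)"
      unfolding d_def using card_box of_nat_le_iff by blast
    also have "\<dots> = (2*2^(k+1)+1) ^ d" by simp
    also have "\<dots> \<le> (8 * 2^k) ^ d"
    proof (rule power_mono)
      have "(2::real)^(k+1) = 2*2^k" by simp
      moreover have "(1::real) \<le> 2^k" by simp
      ultimately show "2*2^(k+1)+1 \<le> (8 * 2^k :: real)" by linarith
    qed simp
    also have "\<dots> = 8 ^ d * (2 ^ d) ^ k" by (simp add: power_mult_distrib power_mult[symmetric] mult.commute)
    finally have c: "real (card (box (2^(k+1)) :: (int^'n) set)) \<le> 8 ^ d * (2 ^ d) ^ k" .
    have "2 powr (real k * (1 - p)) = (2 powr (1 - p)) ^ k"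
      by (simp add: powr_realpow[symmetric] powr_powr mult.commute)
    then have "Cpd p TYPE('n) k = (2 powr (1 - p)) ^ k * real (card (box (2^(k+1)) :: (int^'n) set))"
      by (simp add: Cpd_def)
    also have "\<dots> \<le> (2 powr (1 - p)) ^ k * (8 ^ d * (2 ^ d) ^ k)"
      by (rule mult_left_mono[OF c]) simp
    also have "\<dots> = 8 ^ d * q ^ k" by (simp add: q_def power_mult_distrib)
    finally show ?thesis by (simp add: Cpd_def)
  qed
  show ?thesis
    by (rule summable_comparison_test'[OF _ bound]) (intro summable_mult summable_geometric, use q0 q1 in auto)
qed



theorem lemma5:
  fixes P :: "('n::finite bond \<Rightarrow> real) measure"
    and p :: real
    and u :: "('n bond \<Rightarrow> real) \<Rightarrow> int^'n \<Rightarrow> real"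
    and b :: "'n bond"
  assumes "stationary_measure P"
    and "p > real CARD('n) + 1"
    and "stationary_field P u"
  shows "summable (Cpd p TYPE('n))
    \<and> (\<integral>\<^sup>+ a. ennreal ((grad (u a) b)\<^sup>2 * chem_dist_pow p a (xb b) (yb b)) \<partial>P)
      \<le> ennreal (suminf (Cpd p TYPE('n)))
         * (\<Sum>i\<in>UNIV. \<integral>\<^sup>+ a. ennreal (a (0, i) * (grad (u a) (0, i))\<^sup>2) \<partial>P)"
proof -
  have summ: "summable (Cpd p TYPE('n))" using summable_Cpd[OF assms(2)] .
  have st2: "sets P = sets Omega_M" and st3: "\<And>z. distr P P (cshift z) = P"
    using assms(1) by (auto simp: stationary_measure_def)
  have um[measurable]: "\<And>x. (\<lambda>a. u a x) \<in> borel_measurable P"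
    and uAE: "\<And>x z. AE a in P. u (cshift z a) x = u a (x + z)"
    using assms(3) by (auto simp: stationary_field_def)
  have spP: "space P = space Omega_M" using sets_eq_imp_space_eq[OF st2] .
  have a01: "\<forall>b. 0 \<le> a b \<and> a b \<le> 1" if "a \<in> space P" for a
    using that by (simp add: spP space_Omega)
  have cm[measurable]: "(\<lambda>a. a b') \<in> borel_measurable P" for b'
    by (subst measurable_cong_sets[OF st2 refl]) (rule comp_meas)
  have csm: "cshift z \<in> measurable P P" for z
    by (subst measurable_cong_sets[OF st2 st2]) (rule cshift_meas)
  define I where "I i = (\<integral>\<^sup>+a. ennreal (a (0,i) * (grad (u a) (0,i))\<^sup>2) \<partial>P)" for i
  have stat: "(\<integral>\<^sup>+a. ennreal (a (z,i) * (grad (u a) (z,i))\<^sup>2) \<partial>P) = I i" for z i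
  proof -
    define g where "g = (\<lambda>a::'n bond \<Rightarrow> real. ennreal (a (0,i) * (grad (u a) (0,i))\<^sup>2))"
    have gm: "g \<in> borel_measurable P" unfolding g_def grad_def xb_def yb_def by measurable
    have "I i = integral\<^sup>N (distr P P (cshift z)) g" by (simp add: st3 I_def g_def)
    also have "\<dots> = (\<integral>\<^sup>+a. g (cshift z a) \<partial>P)"
      by (rule nn_integral_distr[OF csm]) (simp add: st3 gm)
    also have "\<dots> = (\<integral>\<^sup>+a. ennreal (a (z,i) * (grad (u a) (z,i))\<^sup>2) \<partial>P)"
    proof (rule nn_integral_cong_AE)
      have "AE a in P. u (cshift z a) (0 + unitv i) = u a (0 + unitv i + z)" by (rule uAE)
      moreover have "AE a in P. u (cshift z a) 0 = u a (0 + z)" by (rule uAE)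
      ultimately show "AE a in P. g (cshift z a) = ennreal (a (z,i) * (grad (u a) (z,i))\<^sup>2)"
        by eventually_elim (simp add: g_def grad_def xb_def yb_def cshift_def bshift_def add.commute)
    qed
    finally show ?thesis by simp
  qed
  have xy: "xb b \<noteq> yb b" by (simp add: xb_def yb_def unitv_def)
  have p1: "1 < p" using assms(2) by simp
  define c where "c k = 2 powr (real k * (1 - p))" for k
  define B where "B k = (box (2^(k+1)) :: (int^'n) set)" for k
  have pw: "ennreal ((grad (u a) b)\<^sup>2 * chem_dist_pow p a (xb b) (yb b))
     \<le> (\<Sum>k. ennreal (c k) * (\<Sum>x'\<in>B k. \<Sum>i\<in>UNIV. ennreal (a (xb b + x', i) * (grad (u a) (xb b + x', i))\<^sup>2)))"
    if a: "a \<in> space P" for a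
  proof -
    have h: "\<forall>b. 0 \<le> a b \<and> a b \<le> 1" by (rule a01[OF a])
    have eq: "ennreal (Sk a (u a) (xb b) (2^(k+1))) = (\<Sum>x'\<in>B k. \<Sum>i\<in>UNIV. ennreal (a (xb b + x', i) * (grad (u a) (xb b + x', i))\<^sup>2))" for k
    proof -
      have nn: "0 \<le> a (xb b + x', i) * (grad (u a) (xb b + x', i))\<^sup>2" for x' i using h by simp
      have "ennreal (Sk a (u a) (xb b) (2^(k+1))) = (\<Sum>x'\<in>B k. ennreal (\<Sum>i\<in>UNIV. a (xb b + x', i) * (grad (u a) (xb b + x', i))\<^sup>2))"
        unfolding Sk_def B_def by (rule sum_ennreal[symmetric]) (intro sum_nonneg nn)
      also have "\<dots> = (\<Sum>x'\<in>B k. \<Sum>i\<in>UNIV. ennreal (a (xb b + x', i) * (grad (u a) (xb b + x', i))\<^sup>2))"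
        by (intro sum.cong refl sum_ennreal[symmetric] nn)
      finally show ?thesis .
    qed
    have "ennreal ((grad (u a) b)\<^sup>2 * chem_dist_pow p a (xb b) (yb b))
      = ennreal ((u a (yb b) - u a (xb b))\<^sup>2 * chem_dist_pow p a (xb b) (yb b))" by (simp add: grad_def)
    also have "\<dots> \<le> (\<Sum>k. ennreal (2 powr (real k * (1 - p))) * ennreal (Sk a (u a) (xb b) (2^(k+1))))"
      by (rule pointwise[OF h p1 xy])
    also have "\<dots> = (\<Sum>k. ennreal (c k) * (\<Sum>x'\<in>B k. \<Sum>i\<in>UNIV. ennreal (a (xb b + x', i) * (grad (u a) (xb b + x', i))\<^sup>2)))"
      by (simp only: eq c_def)
    finally show ?thesis .
  qed
  have "(\<integral>\<^sup>+ a. ennreal ((grad (u a) b)\<^sup>2 * chem_dist_pow p a (xb b) (yb b)) \<partial>P)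
     \<le> (\<integral>\<^sup>+ a. (\<Sum>k. ennreal (c k) * (\<Sum>x'\<in>B k. \<Sum>i\<in>UNIV. ennreal (a (xb b + x', i) * (grad (u a) (xb b + x', i))\<^sup>2))) \<partial>P)"
    by (rule nn_integral_mono) (rule pw)
  also have "\<dots> = (\<Sum>k. \<integral>\<^sup>+ a. ennreal (c k) * (\<Sum>x'\<in>B k. \<Sum>i\<in>UNIV. ennreal (a (xb b + x', i) * (grad (u a) (xb b + x', i))\<^sup>2)) \<partial>P)"
    by (rule nn_integral_suminf) (unfold grad_def xb_def yb_def, measurable)
  also have "\<dots> = (\<Sum>k. ennreal (c k) * (\<Sum>x'\<in>B k. \<Sum>i\<in>UNIV. \<integral>\<^sup>+ a. ennreal (a (xb b + x', i) * (grad (u a) (xb b + x', i))\<^sup>2) \<partial>P))"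
  proof (rule suminf_cong)
    fix k
    show "(\<integral>\<^sup>+ a. ennreal (c k) * (\<Sum>x'\<in>B k. \<Sum>i\<in>UNIV. ennreal (a (xb b + x', i) * (grad (u a) (xb b + x', i))\<^sup>2)) \<partial>P)
      = ennreal (c k) * (\<Sum>x'\<in>B k. \<Sum>i\<in>UNIV. \<integral>\<^sup>+ a. ennreal (a (xb b + x', i) * (grad (u a) (xb b + x', i))\<^sup>2) \<partial>P)"
    proof -
      have F: "(\<lambda>a. ennreal (a (xb b + x', i) * (grad (u a) (xb b + x', i))\<^sup>2)) \<in> borel_measurable P" for x' i
        unfolding grad_def xb_def yb_def by measurable
      have G: "(\<lambda>a. \<Sum>i\<in>UNIV. ennreal (a (xb b + x', i) * (grad (u a) (xb b + x', i))\<^sup>2)) \<in> borel_measurable P" for x'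
        by (rule borel_measurable_sum) (rule F)
      have H: "(\<lambda>a. \<Sum>x'\<in>B k. \<Sum>i\<in>UNIV. ennreal (a (xb b + x', i) * (grad (u a) (xb b + x', i))\<^sup>2)) \<in> borel_measurable P"
        by (rule borel_measurable_sum) (rule G)
      have "(\<integral>\<^sup>+ a. ennreal (c k) * (\<Sum>x'\<in>B k. \<Sum>i\<in>UNIV. ennreal (a (xb b + x', i) * (grad (u a) (xb b + x', i))\<^sup>2)) \<partial>P)
        = ennreal (c k) * (\<integral>\<^sup>+ a. (\<Sum>x'\<in>B k. \<Sum>i\<in>UNIV. ennreal (a (xb b + x', i) * (grad (u a) (xb b + x', i))\<^sup>2)) \<partial>P)"
        by (rule nn_integral_cmult[OF H])
      also have "(\<integral>\<^sup>+ a. (\<Sum>x'\<in>B k. \<Sum>i\<in>UNIV. ennreal (a (xb b + x', i) * (grad (u a) (xb b + x', i))\<^sup>2)) \<partial>P)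
        = (\<Sum>x'\<in>B k. \<integral>\<^sup>+ a. (\<Sum>i\<in>UNIV. ennreal (a (xb b + x', i) * (grad (u a) (xb b + x', i))\<^sup>2)) \<partial>P)"
        by (rule nn_integral_sum[OF G])
      also have "\<dots> = (\<Sum>x'\<in>B k. \<Sum>i\<in>UNIV. \<integral>\<^sup>+ a. ennreal (a (xb b + x', i) * (grad (u a) (xb b + x', i))\<^sup>2) \<partial>P)"
        by (intro sum.cong refl nn_integral_sum F)
      finally show ?thesis .
    qed
  qed
  also have "\<dots> = (\<Sum>k. ennreal (Cpd p TYPE('n) k) * (\<Sum>i\<in>UNIV. I i))"
  proof (rule suminf_cong)
    fix k
    have "(\<Sum>x'\<in>B k. \<Sum>i\<in>UNIV. \<integral>\<^sup>+ a. ennreal (a (xb b + x', i) * (grad (u a) (xb b + x', i))\<^sup>2) \<partial>P)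
       = (\<Sum>x'\<in>B k. \<Sum>i\<in>UNIV. I i)" by (simp add: stat)
    also have "\<dots> = of_nat (card (B k)) * (\<Sum>i\<in>UNIV. I i)" by simp
    finally have "ennreal (c k) * (\<Sum>x'\<in>B k. \<Sum>i\<in>UNIV. \<integral>\<^sup>+ a. ennreal (a (xb b + x', i) * (grad (u a) (xb b + x', i))\<^sup>2) \<partial>P)
      = (ennreal (c k) * of_nat (card (B k))) * (\<Sum>i\<in>UNIV. I i)" by (simp add: mult.assoc)
    also have "ennreal (c k) * of_nat (card (B k)) = ennreal (Cpd p TYPE('n) k)"
      by (simp add: Cpd_def c_def B_def ennreal_mult ennreal_of_nat_eq_real_of_nat)
    finally show "ennreal (c k) * (\<Sum>x'\<in>B k. \<Sum>i\<in>UNIV. \<integral>\<^sup>+ a. ennreal (a (xb b + x', i) * (grad (u a) (xb b + x', i))\<^sup>2) \<partial>P)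
      = ennreal (Cpd p TYPE('n) k) * (\<Sum>i\<in>UNIV. I i)" .
  qed
  also have "\<dots> = (\<Sum>k. ennreal (Cpd p TYPE('n) k)) * (\<Sum>i\<in>UNIV. I i)"
    by (rule ennreal_suminf_multc)
  also have "(\<Sum>k. ennreal (Cpd p TYPE('n) k)) = ennreal (suminf (Cpd p TYPE('n)))"
    by (rule suminf_ennreal2[OF _ summ]) (simp add: Cpd_def)
  finally show ?thesis using summ by (simp add: I_def)
qed

end
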